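(* Let $p,q\in\mathbb N$ and $A\in\mathrm{Rec}_{p\times q}(\mathbb Q)$. Then there exists a non-zero natural integer $N$ such that $N^{n+1}A[U,W]\in\mathbb Z$ for all $n\in\mathbb N$ and all $(U,W)\in\mathcal M_{p\times q}^n$.
   Context: $\mathcal M_{p\times q}^n$ is the set of pairs $(U,W)$ of words of common length $n$ with $U\in\{0,\dots,p-1\}^n$, $W\in\{0,\dots,q-1\}^n$, $\mathcal M_{p\times q}=\bigcup_n\mathcal M_{p\times q}^n$. For $A:\mathcal M_{p\times q}\to\mathbb Q$ (values $A[U,W]$), $(\rho(S,T)A)[U,W]=A[US,WT]$. $\mathrm{Rec}_{p\times q}(\mathbb Q)$ is the set of $A$ whose linear span of $\{\rho(S,T)A\}$ is finite-dimensional. *)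

theory Defs
  imports Complex_Main
begin

definition Mn :: "nat \<Rightarrow> nat \<Rightarrow> nat \<Rightarrow> (nat list \<times> nat list) set" where
  "Mn p q n = {(U, W). length U = n \<and> length W = n \<and> set U \<subseteq> {..<p} \<and> set W \<subseteq> {..<q}}"

definition Mall :: "nat \<Rightarrow> nat \<Rightarrow> (nat list \<times> nat list) set" where
  "Mall p q = (\<Union>n. Mn p q n)"

definition rho :: "nat list \<Rightarrow> nat list \<Rightarrow> (nat list \<times> nat list \<Rightarrow> rat) \<Rightarrow> (nat list \<times> nat list \<Rightarrow> rat)" where
  "rho S T A = (\<lambda>(U, W). A (U @ S, W @ T))"

text \<open>A is recognizable iff the Q-linear span of the functions rho S T A (as functions on
  Mall p q) is finite-dimensional, i.e. contained in the span of finitely many functions.\<close>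
definition Rec :: "nat \<Rightarrow> nat \<Rightarrow> (nat list \<times> nat list \<Rightarrow> rat) \<Rightarrow> bool" where
  "Rec p q A \<longleftrightarrow> (\<exists>F :: (nat list \<times> nat list \<Rightarrow> rat) set. finite F \<and>
     (\<forall>(S, T) \<in> Mall p q. \<exists>c :: (nat list \<times> nat list \<Rightarrow> rat) \<Rightarrow> rat.
        \<forall>(U, W) \<in> Mall p q. rho S T A (U, W) = (\<Sum>f\<in>F. c f * f (U, W))))"

end

theory Submission
  imports Defs "HOL-Library.Function_Algebras"
begin

type_synonym fn = "nat list \<times> nat list \<Rightarrow> rat"

definition fscale :: "rat \<Rightarrow> fn \<Rightarrow> fn" where
  "fscale c f = (\<lambda>x. c * f x)"

interpretation fv: vector_space fscale
  by unfold_locales (auto simp: fscale_def fun_eq_iff algebra_simps)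

lemma sum_fun_apply: "(\<Sum>b\<in>B. (g b :: fn)) x = (\<Sum>b\<in>B. g b x)"
  by (induction B rule: infinite_finite_induct) auto

lemma Mall_iff: "(U, W) \<in> Mall p q \<longleftrightarrow>
   length U = length W \<and> set U \<subseteq> {..<p} \<and> set W \<subseteq> {..<q}"
  unfolding Mall_def Mn_def by auto

lemma common_denom:
  assumes "finite (Q :: rat set)"
  shows "\<exists>D::nat. D > 0 \<and> (\<forall>r\<in>Q. of_nat D * r \<in> \<int>)"
  using assms
proof (induction Q rule: finite_induct)
  case empty
  then show ?case by (intro exI[of _ 1]) auto
next
  case (insert r Q)
  then obtain D :: nat where D: "D > 0" "\<forall>r\<in>Q. of_nat D * r \<in> \<int>" by blast
  obtain a b where ab: "quotient_of r = (a, b)" by (cases "quotient_of r")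
  have b: "b > 0" using ab quotient_of_denom_pos by blast
  have r: "r = of_int a / of_int b" using ab quotient_of_div by blast
  define D' where "D' = D * nat b"
  have "D' > 0" using D b by (simp add: D'_def)
  moreover have "of_nat D' * r \<in> \<int>"
  proof -
    have "of_nat D' * r = of_nat D * of_int a"
      using b by (simp add: D'_def r)
    then show ?thesis by simp
  qed
  moreover have "of_nat D' * s \<in> \<int>" if "s \<in> Q" for s
  proof -
    have "of_nat D' * s = of_int b * (of_nat D * s)"
      using b by (simp add: D'_def)
    then show ?thesis using D(2) that by (metis Ints_mult Ints_of_int)
  qed
  ultimately show ?case by blast
qed

theorem mainTheorem9:
  fixes p q :: nat and A :: "nat list \<times> nat list \<Rightarrow> rat"
  assumes "Rec p q A"
  shows "\<exists>N::nat. N \<noteq> 0 \<and>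
           (\<forall>n. \<forall>(U, W) \<in> Mn p q n. (of_nat N) ^ (n + 1) * A (U, W) \<in> \<int>)"
proof -
  define R :: "fn \<Rightarrow> fn" where "R g = (\<lambda>x. if x \<in> Mall p q then g x else 0)" for g
  define G where "G = (\<lambda>(S, T). R (rho S T A))"
  define V where "V = G ` Mall p q"
  obtain F where F: "finite F" and Fsp: "\<forall>(S, T) \<in> Mall p q. \<exists>c :: fn \<Rightarrow> rat.
        \<forall>(U, W) \<in> Mall p q. rho S T A (U, W) = (\<Sum>f\<in>F. c f * f (U, W))"
    using assms unfolding Rec_def by blast
  have VF: "V \<subseteq> fv.span (R ` F)"
  proof
    fix v assume "v \<in> V"
    then obtain S T where ST: "(S, T) \<in> Mall p q" and v: "v = G (S, T)" unfolding V_def by auto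
    obtain c where c: "\<forall>(U, W) \<in> Mall p q. rho S T A (U, W) = (\<Sum>f\<in>F. c f * f (U, W))"
      using Fsp ST by blast
    have "v = (\<Sum>f\<in>F. fscale (c f) (R f))"
    proof
      fix x
      show "v x = (\<Sum>f\<in>F. fscale (c f) (R f)) x"
        using c by (cases x) (auto simp: v G_def R_def sum_fun_apply fscale_def)
    qed
    also have "\<dots> \<in> fv.span (R ` F)"
      by (intro fv.span_sum fv.span_scale fv.span_base) auto
    finally show "v \<in> fv.span (R ` F)" .
  qed
  obtain B where BV: "B \<subseteq> V" and Bi: "fv.independent B" and VB: "V \<subseteq> fv.span B"
    using fv.maximal_independent_subset by blast
  have "B \<subseteq> fv.span (R ` F)" using BV VF by blast
  then have Bfin: "finite B" using fv.independent_span_bound[OF finite_imageI[OF F] Bi] by blast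
  define coef where "coef v = (SOME u. v = (\<Sum>b\<in>B. fscale (u b) b))" for v
  have coef: "v = (\<Sum>b\<in>B. fscale (coef v b) b)" if "v \<in> V" for v
  proof -
    have "v \<in> range (\<lambda>u. \<Sum>b\<in>B. fscale (u b) b)"
      using VB that fv.span_finite[OF Bfin] by auto
    then obtain u where "v = (\<Sum>b\<in>B. fscale (u b) b)" by blast
    then show ?thesis unfolding coef_def by (rule someI[of "\<lambda>u. v = (\<Sum>b\<in>B. fscale (u b) b)" u])
  qed
  define rep where "rep b = (SOME st. st \<in> Mall p q \<and> b = G st)" for b
  have rep: "rep b \<in> Mall p q \<and> b = G (rep b)" if "b \<in> B" for b
  proof -
    have "\<exists>st. st \<in> Mall p q \<and> b = G st" using that BV unfolding V_def by blast
    then show ?thesis unfolding rep_def by (rule someI_ex)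
  qed
  define K where "K = insert ([], []) (rep ` B)"
  define V' where "V' = (\<lambda>(x, y, (S, T)). G (x # S, y # T)) ` ({..<p} \<times> {..<q} \<times> K)"
  define Q where "Q = (\<lambda>(v, b). coef v b) ` (V' \<times> B) \<union> (\<lambda>b. b ([], [])) ` B \<union> {A ([], [])}"
  have "finite Q" unfolding Q_def V'_def K_def using Bfin by auto
  then obtain D :: nat where D: "D > 0" "\<forall>r\<in>Q. of_nat D * r \<in> \<int>"
    using common_denom by blast
  have KM: "st \<in> Mall p q" if "st \<in> K" for st
    using that rep unfolding K_def by (auto simp: Mall_iff)
  have V'V: "G (x # S, y # T) \<in> V" if "x < p" "y < q" "(S, T) \<in> K" for x y S T
    using KM[OF that(3)] that unfolding V_def by (auto simp: Mall_iff)
  have V'Q: "of_nat D * coef (G (x # S, y # T)) b \<in> \<int>"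
    if "x < p" "y < q" "(S, T) \<in> K" "b \<in> B" for x y S T b
  proof -
    have "G (x # S, y # T) \<in> V'" unfolding V'_def using that by force
    then have "coef (G (x # S, y # T)) b \<in> Q" unfolding Q_def using that by force
    then show ?thesis using D by blast
  qed
  have peel: "G (S, T) (U @ [x], W @ [y]) = (\<Sum>b\<in>B. coef (G (x # S, y # T)) b * b (U, W))"
    if "x < p" "y < q" "(S, T) \<in> K" "(U, W) \<in> Mall p q" for x y S T U W
  proof -
    have m1: "(U @ [x], W @ [y]) \<in> Mall p q" "(U, W) \<in> Mall p q" using that by (auto simp: Mall_iff)
    have "G (S, T) (U @ [x], W @ [y]) = G (x # S, y # T) (U, W)"
      using m1 KM[OF that(3)] that(1,2) by (auto simp: G_def R_def rho_def Mall_iff)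
    also have "\<dots> = (\<Sum>b\<in>B. fscale (coef (G (x # S, y # T)) b) b) (U, W)"
      using coef[OF V'V[OF that(1-3)]] by simp
    finally show ?thesis by (simp add: sum_fun_apply fscale_def)
  qed
  have claim: "\<forall>b\<in>B. \<forall>(U, W) \<in> Mn p q n. of_nat D ^ (n + 1) * b (U, W) \<in> \<int>" for n
  proof (induction n)
    case 0
    show ?case
    proof (intro ballI, clarify)
      fix b U W assume b: "b \<in> B" and "(U, W) \<in> Mn p q 0"
      then have "U = []" "W = []" by (auto simp: Mn_def)
      moreover have "b ([], []) \<in> Q" unfolding Q_def using b by auto
      ultimately show "of_nat D ^ (0 + 1) * b (U, W) \<in> \<int>" using D by auto
    qed
  next
    case (Suc n)
    show ?case
    proof (intro ballI, clarify)
      fix b U W assume b: "b \<in> B" and UW: "(U, W) \<in> Mn p q (Suc n)"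
      have UWne: "U \<noteq> []" "W \<noteq> []" using UW by (auto simp: Mn_def)
      define U' x W' y where UWdefs: "U' = butlast U" "x = last U" "W' = butlast W" "y = last W"
      have U: "U = U' @ [x]" and W: "W = W' @ [y]" using UWne by (simp_all add: UWdefs)
      have xy: "x < p" "y < q" and UW': "(U', W') \<in> Mn p q n"
        using UW U W by (auto simp: Mn_def)
      have UWM: "(U', W') \<in> Mall p q" using UW' by (auto simp: Mall_def)
      have rb: "rep b \<in> K" "b = G (rep b)" using rep[OF b] b by (auto simp: K_def)
      obtain S T where ST: "rep b = (S, T)" by fastforce
      have "b (U, W) = (\<Sum>b'\<in>B. coef (G (x # S, y # T)) b' * b' (U', W'))"
        using peel[OF xy, of S T U' W'] rb ST UWM U W by simp
      then have "of_nat D ^ (Suc n + 1) * b (U, W) =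
          (\<Sum>b'\<in>B. (of_nat D * coef (G (x # S, y # T)) b') * (of_nat D ^ (n + 1) * b' (U', W')))"
        by (simp add: sum_distrib_left algebra_simps)
      also have "\<dots> \<in> \<int>"
        apply (rule Ints_sum, rule Ints_mult)
        using V'Q[OF xy] rb ST Suc UW' by auto
      finally show "of_nat D ^ (Suc n + 1) * b (U, W) \<in> \<int>" .
    qed
  qed
  have "\<forall>(U, W) \<in> Mn p q n. of_nat D ^ (n + 1) * A (U, W) \<in> \<int>" for n
  proof (cases n)
    case 0
    then show ?thesis using D unfolding Q_def by (auto simp: Mn_def)
  next
    case (Suc k)
    show ?thesis
    proof clarify
      fix U W assume UW: "(U, W) \<in> Mn p q n"
      have UWne: "U \<noteq> []" "W \<noteq> []" using UW Suc by (auto simp: Mn_def)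
      define U' x W' y where UWdefs: "U' = butlast U" "x = last U" "W' = butlast W" "y = last W"
      have U: "U = U' @ [x]" and W: "W = W' @ [y]" using UWne by (simp_all add: UWdefs)
      have xy: "x < p" "y < q" and UW': "(U', W') \<in> Mn p q k"
        using UW U W Suc by (auto simp: Mn_def)
      have UWM: "(U', W') \<in> Mall p q" "(U, W) \<in> Mall p q" using UW' UW by (auto simp: Mall_def)
      have K0: "([], []) \<in> K" by (simp add: K_def)
      have "A (U, W) = G ([], []) (U, W)"
        using UWM by (simp add: G_def R_def rho_def)
      also have "\<dots> = (\<Sum>b\<in>B. coef (G ([x], [y])) b * b (U', W'))"
        using peel[OF xy K0 UWM(1)] U W by simp
      finally have "of_nat D ^ (n + 1) * A (U, W) =
          (\<Sum>b\<in>B. (of_nat D * coef (G ([x], [y])) b) * (of_nat D ^ (k + 1) * b (U', W')))"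
        using Suc by (simp add: sum_distrib_left algebra_simps)
      also have "\<dots> \<in> \<int>"
        apply (rule Ints_sum, rule Ints_mult)
        using V'Q[OF xy K0] claim[of k] UW' by auto
      finally show "of_nat D ^ (n + 1) * A (U, W) \<in> \<int>" .
    qed
  qed
  then show ?thesis using D by (intro exI[of _ D]) auto
qed

end
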